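(* There exist $p,k,E$ and source covariance matrices $\Sigma_1,\dots,\Sigma_E$ such that every matrix $V^{\mathrm{seq}}=[v_1,\dots,v_k]$ produced by the sequential procedure below fails to solve rank-$k$ minPCA. The sequential procedure chooses orthonormal vectors with $v_1\in\arg\max_{v\in\mathbb{R}^p,\|v\|=1}\min_{e\in\mathcal{E}}\mathcal{L}_{\mathrm{var}}(v;\Sigma_e)$ and, for $2\le j\le k$, $v_j\in\arg\max\{\min_{e\in\mathcal{E}}\mathcal{L}_{\mathrm{var}}([v_1,\dots,v_{j-1},v];\Sigma_e): v\in\mathbb{R}^p,\ \|v\|=1,\ v\perp v_i\ \forall i<j\}$.
   Context: $\mathcal{O}_{p\times k}=\{V\in\mathbb{R}^{p\times k}:V^\top V=I_k\}$; source domains $\mathcal{E}=\{1,\dots,E\}$ with symmetric positive semidefinite covariances $\Sigma_e$ of positive trace. $\mathcal{L}_{\mathrm{var}}(V;\Sigma)=\operatorname{Tr}(V^\top\Sigma V)$ for any $V$ with orthonormal columns. $V^*$ solves rank-$k$ minPCA if $V^*\in\arg\max_{V\in\mathcal{O}_{p\times k}}\min_{e\in\mathcal{E}}\mathcal{L}_{\mathrm{var}}(V;\Sigma_e)$. *)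

theory Defs
  imports "Jordan_Normal_Form.Matrix"
begin

definition mtrace :: "real mat \<Rightarrow> real" where
  "mtrace A = (\<Sum>i<dim_row A. A $$ (i, i))"

definition sym_psd :: "nat \<Rightarrow> real mat \<Rightarrow> bool" where
  "sym_psd p A \<longleftrightarrow> A \<in> carrier_mat p p \<and> transpose_mat A = A \<and>
     (\<forall>x \<in> carrier_vec p. 0 \<le> x \<bullet> (A *\<^sub>v x))"

definition orth_mats :: "nat \<Rightarrow> nat \<Rightarrow> real mat set" where
  "orth_mats p k = {V. V \<in> carrier_mat p k \<and> transpose_mat V * V = 1\<^sub>m k}"

definition L_var :: "real mat \<Rightarrow> real mat \<Rightarrow> real" where
  "L_var V S = mtrace (transpose_mat V * S * V)"

definition min_L :: "nat \<Rightarrow> (nat \<Rightarrow> real mat) \<Rightarrow> real mat \<Rightarrow> real" where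
  "min_L E Sig V = Min ((\<lambda>e. L_var V (Sig e)) ` {1..E})"

definition is_minPCA :: "nat \<Rightarrow> nat \<Rightarrow> nat \<Rightarrow> (nat \<Rightarrow> real mat) \<Rightarrow> real mat \<Rightarrow> bool" where
  "is_minPCA p k E Sig V \<longleftrightarrow> V \<in> orth_mats p k \<and>
     (\<forall>W \<in> orth_mats p k. min_L E Sig W \<le> min_L E Sig V)"

definition seq_cands :: "nat \<Rightarrow> real vec list \<Rightarrow> real vec set" where
  "seq_cands p prev = {v. v \<in> carrier_vec p \<and> v \<bullet> v = 1 \<and> (\<forall>u \<in> set prev. v \<bullet> u = 0)}"

definition is_seq_output :: "nat \<Rightarrow> nat \<Rightarrow> nat \<Rightarrow> (nat \<Rightarrow> real mat) \<Rightarrow> real vec list \<Rightarrow> bool" where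
  "is_seq_output p k E Sig vs \<longleftrightarrow> length vs = k \<and>
     (\<forall>j<k. vs ! j \<in> seq_cands p (take j vs) \<and>
        (\<forall>v \<in> seq_cands p (take j vs).
           min_L E Sig (mat_of_cols p (take j vs @ [v]))
             \<le> min_L E Sig (mat_of_cols p (take (Suc j) vs))))"

end

theory Submission
  imports Defs
begin


definition Dm :: "nat \<Rightarrow> real mat" where
  "Dm d = mat 3 3 (\<lambda>(i,j). if i = d \<and> j = d then 1 else 0)"

lemma Lvar_Dm:
  assumes V: "V \<in> carrier_mat 3 k" and d: "d < 3"
  shows "L_var V (Dm d) = (\<Sum>j<k. (V $$ (d,j))^2)"
proof -
  have e1: "(transpose_mat V * Dm d) $$ (j,b) = (if b = d then V $$ (d,j) else 0)" if "j < k" "b < 3" for j b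
    using V that d by (simp add: Dm_def scalar_prod_def sum.If_cases if_distrib[of "\<lambda>x. _ * x"] cong: if_cong)
  have "(transpose_mat V * Dm d * V) $$ (j,j) = (V $$ (d,j))^2" if "j < k" for j
  proof -
    have "(transpose_mat V * Dm d * V) $$ (j,j) = (\<Sum>b<3. (transpose_mat V * Dm d) $$ (j,b) * V $$ (b,j))"
      using V that by (simp add: Dm_def scalar_prod_def lessThan_atLeast0)
    also have "\<dots> = (\<Sum>b<3. (if b = d then V $$ (d,j) * V $$ (b,j) else 0))"
      using e1 that by (intro sum.cong) auto
    also have "\<dots> = (V $$ (d,j))^2" using d by (simp add: power2_eq_square)
    finally show ?thesis .
  qed
  then show ?thesis using V unfolding L_var_def mtrace_def by (simp add: Dm_def)
qed


lemma sum3: "(\<Sum>i<(3::nat). f i) = f 0 + f 1 + (f 2 :: real)"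
  by (simp add: numeral_3_eq_3 numeral_2_eq_2)
lemma sum3': "(\<Sum>i\<in>{0..<(3::nat)}. f i) = f 0 + f 1 + (f 2 :: real)"
  by (simp add: numeral_3_eq_3 numeral_2_eq_2)
lemma moc_idx: "i < n \<Longrightarrow> j < length vs \<Longrightarrow> mat_of_cols n vs $$ (i,j) = vs ! j $ i"
  by (simp add: mat_of_cols_def)
lemma sum2: "(\<Sum>i<(2::nat). f i) = f 0 + (f 1 :: real)"
  by (simp add: numeral_2_eq_2)

lemma sp3: "dim_vec y = 3 \<Longrightarrow> x \<bullet> y = x$0*y$0 + x$1*y$1 + x$2*y$2"
  unfolding scalar_prod_def by (simp add: numeral_3_eq_3 numeral_2_eq_2)

lemma minL3: "min_L 3 Sig V = min (L_var V (Sig 1)) (min (L_var V (Sig 2)) (L_var V (Sig 3)))"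
proof -
  have "{1..3::nat} = {1,2,3}" by auto
  then show ?thesis unfolding min_L_def by (simp add: min.assoc)
qed

lemma L1: "d < 3 \<Longrightarrow> L_var (mat_of_cols 3 [v]) (Dm d) = (v$d)^2"
  using Lvar_Dm[OF mat_of_cols_carrier(1)[of 3 "[v]"], of d] by (simp add: moc_idx)

lemma L2: "d < 3 \<Longrightarrow> L_var (mat_of_cols 3 [v,w]) (Dm d) = (v$d)^2 + (w$d)^2"
  using Lvar_Dm[OF mat_of_cols_carrier(1)[of 3 "[v,w]"], of d] by (simp add: moc_idx sum2)

lemma Dm_psd: "d < 3 \<Longrightarrow> sym_psd 3 (Dm d) \<and> 0 < mtrace (Dm d)"
proof -
  assume d: "d < 3"
  have "x \<bullet> (Dm d *\<^sub>v x) = (x$d)^2" if "x \<in> carrier_vec 3" for x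
  proof -
    have "(Dm d *\<^sub>v x) $ i = (if i = d then x $ d else 0)" if "i < 3" for i
      using that d \<open>x \<in> carrier_vec 3\<close>
      by (simp add: Dm_def mult_mat_vec_def scalar_prod_def row_def if_distrib[of "\<lambda>x. x * _"] cong: if_cong)
    moreover have "d = 0 \<or> d = 1 \<or> d = 2" using d by auto
    moreover have "dim_vec (Dm d *\<^sub>v x) = 3" by (simp add: Dm_def)
    ultimately show ?thesis using \<open>x \<in> carrier_vec 3\<close>
      by (auto simp only: sp3 power2_eq_square) auto
  qed
  moreover have "transpose_mat (Dm d) = Dm d"
    by (rule eq_matI) (auto simp: Dm_def)
  moreover have "mtrace (Dm d) = 1" using d by (simp add: mtrace_def Dm_def)
  ultimately show ?thesis unfolding sym_psd_def by (simp add: Dm_def)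
qed


lemma sq19: "(t::real)^2 = 1/9 \<Longrightarrow> t = 1/3 \<or> t = -1/3"
proof -
  assume "t^2 = 1/9"
  then have "(t - 1/3) * (t + 1/3) = 0" by (simp add: algebra_simps power2_eq_square)
  then show ?thesis by auto
qed

lemma key:
  fixes x0 x1 x2 y0 y1 y2 :: real
  assumes "x0^2+x1^2+x2^2 = 1" "y0^2+y1^2+y2^2 = 1" "y0*x0+y1*x1+y2*x2 = 0"
    "1/3 \<le> x0^2" "1/3 \<le> x1^2" "1/3 \<le> x2^2"
    "2/3 \<le> x0^2 + y0^2" "2/3 \<le> x1^2 + y1^2" "2/3 \<le> x2^2 + y2^2"
  shows False
proof -
  have h: "x0^2 = 1/3" "x1^2 = 1/3" "x2^2 = 1/3" "y0^2 = 1/3" "y1^2 = 1/3" "y2^2 = 1/3"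
    using assms by linarith+
  have "(x0*y0)^2 = 1/9" "(x1*y1)^2 = 1/9" "(x2*y2)^2 = 1/9"
    by (simp only: power_mult_distrib h; simp)+
  then have "x0*y0 = 1/3 \<or> x0*y0 = -1/3" "x1*y1 = 1/3 \<or> x1*y1 = -1/3" "x2*y2 = 1/3 \<or> x2*y2 = -1/3"
    using sq19 by blast+
  then show False using assms(3) by (auto simp: algebra_simps)
qed

lemma t4: "i < 2 \<Longrightarrow> j < 2 \<Longrightarrow> (transpose_mat (mat_of_cols 3 [x,y]) * (mat_of_cols 3 [x,y])) $$ (i,j) = col (mat_of_cols 3 [x,y]) i \<bullet> col (mat_of_cols 3 [x,y]) j"
proof -
  assume a: "i < 2" "j < 2"
  let ?M = "mat_of_cols 3 [x,y]"
  have d: "dim_col ?M = 2" "dim_row (transpose_mat ?M) = 2" by simp_all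
  have "(transpose_mat ?M * ?M) $$ (i,j) = row (transpose_mat ?M) i \<bullet> col ?M j"
    by (rule index_mult_mat(1)) (use a d in auto)
  also have "row (transpose_mat ?M) i = col ?M i" by (rule row_transpose) (use a d in auto)
  finally show ?thesis .
qed

lemma orthI:
  assumes "dim_vec x = 3" "dim_vec y = 3" "x \<bullet> x = 1" "y \<bullet> y = 1" "x \<bullet> y = (0::real)"
  shows "mat_of_cols 3 [x,y] \<in> orth_mats 3 2"
proof -
  have xc: "x \<in> carrier_vec 3" "y \<in> carrier_vec 3" using carrier_vecI[OF assms(1)] carrier_vecI[OF assms(2)] by blast+
  have c: "y \<bullet> x = 0" using comm_scalar_prod[OF xc] assms(5) by simp
  let ?M = "mat_of_cols 3 [x,y]"
  have c0: "col ?M 0 = x" using col_mat_of_cols[of 0 "[x,y]" 3] xc by simp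
  have c1: "col ?M 1 = y" using col_mat_of_cols[of 1 "[x,y]" 3] xc by simp
  have "transpose_mat ?M * ?M = 1\<^sub>m 2"
  proof (rule eq_matI)
    fix i j assume ij: "i < dim_row (1\<^sub>m 2)" "j < dim_col (1\<^sub>m 2)"
    then have ij2: "i < 2" "j < 2" by simp_all
    have e: "(transpose_mat ?M * ?M) $$ (i,j) = col ?M i \<bullet> col ?M j" by (rule t4[OF ij2])
    have i: "i = 0 \<or> i = 1" and j: "j = 0 \<or> j = 1" using ij2 by auto
    show "(transpose_mat ?M * ?M) $$ (i,j) = 1\<^sub>m 2 $$ (i,j)"
      unfolding e using i j c0 c1 assms(3,4,5) c by auto
  qed simp_all
  moreover have "?M \<in> carrier_mat 3 2" using mat_of_cols_carrier(1)[of 3 "[x,y]"] by (simp add: numeral_2_eq_2)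
  ultimately show ?thesis unfolding orth_mats_def by simp
qed

theorem mainTheorem4:
  shows "\<exists>(p::nat) (k::nat) (E::nat) (Sig :: nat \<Rightarrow> real mat).
     1 \<le> k \<and> k \<le> p \<and> 1 \<le> E \<and>
     (\<forall>e\<in>{1..E}. sym_psd p (Sig e) \<and> 0 < mtrace (Sig e)) \<and>
     (\<forall>vs. is_seq_output p k E Sig vs \<longrightarrow> \<not> is_minPCA p k E Sig (mat_of_cols p vs))"
proof (rule exI[of _ "3::nat"], rule exI[of _ "2::nat"], rule exI[of _ "3::nat"], rule exI[of _ "\<lambda>e. Dm (e - 1)"], intro conjI)
  let ?S = "\<lambda>e. Dm (e - 1)"
  show "\<forall>e\<in>{1..3}. sym_psd 3 (?S e) \<and> 0 < mtrace (?S e)"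
    using Dm_psd by auto
  show "\<forall>vs. is_seq_output 3 2 3 ?S vs \<longrightarrow> \<not> is_minPCA 3 2 3 ?S (mat_of_cols 3 vs)"
  proof (intro allI impI notI)
    fix vs assume seq: "is_seq_output 3 2 3 ?S vs" and opt: "is_minPCA 3 2 3 ?S (mat_of_cols 3 vs)"
    have len: "length vs = 2" using seq unfolding is_seq_output_def by simp
    then obtain x y where vs: "vs = [x,y]"
      by (metis (no_types, opaque_lifting) One_nat_def Suc_length_conv length_0_conv numeral_2_eq_2)
    have s0: "vs ! 0 \<in> seq_cands 3 (take 0 vs) \<and> (\<forall>v \<in> seq_cands 3 (take 0 vs).
           min_L 3 ?S (mat_of_cols 3 (take 0 vs @ [v])) \<le> min_L 3 ?S (mat_of_cols 3 (take (Suc 0) vs)))"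
      using conjunct2[OF seq[unfolded is_seq_output_def], rule_format, of 0] by simp
    have s1: "vs ! 1 \<in> seq_cands 3 (take 1 vs)"
      using conjunct2[OF seq[unfolded is_seq_output_def], rule_format, of 1] by simp
    have x: "dim_vec x = 3" "x \<bullet> x = 1" using s0 vs by (auto simp: seq_cands_def)
    have y: "dim_vec y = 3" "y \<bullet> y = 1" "y \<bullet> x = 0" using s1 vs by (auto simp: seq_cands_def)
    have best: "min_L 3 ?S (mat_of_cols 3 [v]) \<le> min_L 3 ?S (mat_of_cols 3 [x])"
      if "v \<in> seq_cands 3 []" for v using s0 vs that by simp
    have m1: "min_L 3 ?S (mat_of_cols 3 [v]) = min ((v$0)^2) (min ((v$1)^2) ((v$2)^2))" for v
      by (simp add: minL3 L1)
    have m2: "min_L 3 ?S (mat_of_cols 3 [v,w]) = min ((v$0)^2+(w$0)^2) (min ((v$1)^2+(w$1)^2) ((v$2)^2+(w$2)^2))" for v w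
      by (simp add: minL3 L2)
    define c where "c = 1 / sqrt 3"
    have c2: "c^2 = 1/3" unfolding c_def by (simp add: power_divide)
    define u :: "real vec" where "u = vec 3 (\<lambda>i. c)"
    have ud: "dim_vec u = 3" "u$0 = c" "u$1 = c" "u$2 = c" by (simp_all add: u_def)
    have "u \<bullet> u = 1" using c2 by (simp only: sp3 ud) (simp add: power2_eq_square)
    then have u: "u \<in> seq_cands 3 []" using carrier_vecI[OF ud(1)] unfolding seq_cands_def by simp
    have "min_L 3 ?S (mat_of_cols 3 [u]) = 1/3" unfolding m1 ud using c2 by simp
    with best[OF u] have xb: "1/3 \<le> (x$0)^2" "1/3 \<le> (x$1)^2" "1/3 \<le> (x$2)^2"
      unfolding m1 by auto
    define a where "a = 1 / sqrt 2"
    define b where "b = 1 / sqrt 6"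
    have a2: "a^2 = 1/2" unfolding a_def by (simp add: power_divide)
    have b2: "b^2 = 1/6" unfolding b_def by (simp add: power_divide)
    define w1 :: "real vec" where "w1 = vec 3 (\<lambda>i. if i = 0 then a else if i = 1 then -a else 0)"
    define w2 :: "real vec" where "w2 = vec 3 (\<lambda>i. if i = 2 then -2*b else b)"
    have w: "dim_vec w1 = 3" "w1$0 = a" "w1$1 = -a" "w1$2 = 0"
       "dim_vec w2 = 3" "w2$0 = b" "w2$1 = b" "w2$2 = -2*b" by (simp_all add: w1_def w2_def)
    have "w1 \<bullet> w1 = 1" using a2 by (simp only: sp3 w) (simp add: power2_eq_square)
    moreover have "w2 \<bullet> w2 = 1" using b2 by (simp only: sp3 w) (simp add: power2_eq_square)
    moreover have "w1 \<bullet> w2 = 0" by (simp only: sp3 w; simp add: algebra_simps)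
    ultimately have W: "mat_of_cols 3 [w1,w2] \<in> orth_mats 3 2"
      using w by (intro orthI) auto
    have "min_L 3 ?S (mat_of_cols 3 [w1,w2]) = 2/3"
      unfolding m2 w using a2 b2 by (simp add: power_mult_distrib)
    moreover have "min_L 3 ?S (mat_of_cols 3 [w1,w2]) \<le> min_L 3 ?S (mat_of_cols 3 [x,y])"
      using opt W unfolding is_minPCA_def vs by blast
    ultimately have "2/3 \<le> min_L 3 ?S (mat_of_cols 3 [x,y])" by simp
    then have g: "2/3 \<le> (x$0)^2+(y$0)^2" "2/3 \<le> (x$1)^2+(y$1)^2" "2/3 \<le> (x$2)^2+(y$2)^2"
      unfolding m2 by auto
    have h: "(x$0)^2+(x$1)^2+(x$2)^2 = 1" "(y$0)^2+(y$1)^2+(y$2)^2 = 1"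
       "y$0*x$0+y$1*x$1+y$2*x$2 = 0"
      using x y by (simp_all add: sp3 power2_eq_square)
    show False by (rule key[OF h xb g])
  qed
qed simp_all

end
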